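(* The set of functions $\{\sigma_\omega\}_{\omega\in D}$ is linearly independent as a set of real-valued functions on the set of all metabolic Seifert matrices. That is, if $\omega_1,\dots,\omega_N\in D$ are distinct and $c_1,\dots,c_N\in\mathbb{R}$ satisfy $\sum_i c_i\sigma_{\omega_i}(V)=0$ for every metabolic Seifert matrix $V$, then all $c_i=0$.
   Context: A Seifert matrix is a square integral matrix $V$ with $\det(V-V^T)=\pm1$; it has even size $2g$. It is metabolic if there is a direct summand $L\subset\mathbb{Z}^{2g}$ of rank $g$ with $x^TVy=0$ for all $x,y\in L$. For a unit complex number $\omega$, $\sigma_\omega(V)$ is the signature of the Hermitian matrix $(1-\omega)V+(1-\bar\omega)V^T$. The Alexander polynomial of $V$ is $\Delta_V(t)=\det(V-tV^T)$. $S$ is the set of unit complex numbers with positive imaginary part, and $D\subset S$ is the set of all $\omega\in S$ that are roots of $\Delta_V(t)$ for some Seifert matrix $V$ (equivalently, roots of some integral polynomial $\Delta$ with $\Delta(t^{-1})=\pm t^j\Delta(t)$ for some $j$ and $\Delta(1)=\pm1$). *)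

theory Defs
  imports "Jordan_Normal_Form.Matrix" "Jordan_Normal_Form.Determinant" "Jordan_Normal_Form.Char_Poly"
begin

definition seifert_matrix :: "int mat \<Rightarrow> bool" where
  "seifert_matrix V \<longleftrightarrow> dim_row V = dim_col V \<and> det (V - transpose_mat V) \<in> {1, -1}"

definition int_submodule :: "nat \<Rightarrow> int vec set \<Rightarrow> bool" where
  "int_submodule n L \<longleftrightarrow> L \<subseteq> carrier_vec n \<and> 0\<^sub>v n \<in> L \<and>
     (\<forall>x\<in>L. \<forall>y\<in>L. x + y \<in> L) \<and> (\<forall>c x. x \<in> L \<longrightarrow> c \<cdot>\<^sub>v x \<in> L)"

definition int_comb :: "nat \<Rightarrow> int vec list \<Rightarrow> (nat \<Rightarrow> int) \<Rightarrow> int vec" where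
  "int_comb n vs c = vec n (\<lambda>j. \<Sum>i<length vs. c i * (vs ! i) $ j)"

definition free_of_rank :: "nat \<Rightarrow> nat \<Rightarrow> int vec set \<Rightarrow> bool" where
  "free_of_rank n g L \<longleftrightarrow> (\<exists>vs. length vs = g \<and> set vs \<subseteq> carrier_vec n \<and>
     L = range (int_comb n vs) \<and>
     (\<forall>c. int_comb n vs c = 0\<^sub>v n \<longrightarrow> (\<forall>i<g. c i = 0)))"

definition direct_summand :: "nat \<Rightarrow> int vec set \<Rightarrow> bool" where
  "direct_summand n L \<longleftrightarrow> int_submodule n L \<and> (\<exists>M. int_submodule n M \<and> L \<inter> M = {0\<^sub>v n} \<and>
     (\<forall>x\<in>carrier_vec n. \<exists>l\<in>L. \<exists>m\<in>M. x = l + m))"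

definition metabolic :: "int mat \<Rightarrow> bool" where
  "metabolic V \<longleftrightarrow> (\<exists>g L. dim_row V = 2 * g \<and> dim_col V = 2 * g \<and>
     direct_summand (2 * g) L \<and> free_of_rank (2 * g) g L \<and>
     (\<forall>x\<in>L. \<forall>y\<in>L. x \<bullet> (V *\<^sub>v y) = 0))"

definition hermitian_signature :: "complex mat \<Rightarrow> int" where
  "hermitian_signature A =
     int (\<Sum>x\<in>{x. poly (char_poly A) x = 0 \<and> Im x = 0 \<and> Re x > 0}. order x (char_poly A))
   - int (\<Sum>x\<in>{x. poly (char_poly A) x = 0 \<and> Im x = 0 \<and> Re x < 0}. order x (char_poly A))"

definition tristram_levine :: "complex \<Rightarrow> int mat \<Rightarrow> int" where
  "tristram_levine \<omega> V =
     (let W = map_mat of_int V in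
      hermitian_signature ((1 - \<omega>) \<cdot>\<^sub>m W + (1 - cnj \<omega>) \<cdot>\<^sub>m transpose_mat W))"

definition alexander_poly :: "int mat \<Rightarrow> int poly" where
  "alexander_poly V = det (map_mat (\<lambda>a. [:a:]) V - map_mat (\<lambda>a. [:0, a:]) (transpose_mat V))"

definition D_set :: "complex set" where
  "D_set = {\<omega>. cmod \<omega> = 1 \<and> Im \<omega> > 0 \<and>
     (\<exists>V. seifert_matrix V \<and> poly (map_poly of_int (alexander_poly V)) \<omega> = 0)}"

end

theory Submission
  imports Defs "Jordan_Normal_Form.Schur_Decomposition"
begin

definition dg :: "'a::zero mat \<Rightarrow> 'a mat" where
  "dg A = four_block_mat A (0\<^sub>m (dim_row A) (dim_col A)) (0\<^sub>m (dim_row A) (dim_col A)) A"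

definition sb :: "nat \<Rightarrow> 'a::comm_ring_1 \<Rightarrow> 'a \<Rightarrow> 'a \<Rightarrow> 'a \<Rightarrow> 'a mat" where
  "sb n s t u v = four_block_mat (s \<cdot>\<^sub>m 1\<^sub>m n) (t \<cdot>\<^sub>m 1\<^sub>m n) (u \<cdot>\<^sub>m 1\<^sub>m n) (v \<cdot>\<^sub>m 1\<^sub>m n)"

lemma dg_carrier[simp]: "A \<in> carrier_mat n n \<Longrightarrow> dg A \<in> carrier_mat (n+n) (n+n)"
  unfolding dg_def by auto

lemma sb_carrier[simp]: "sb n s t u v \<in> carrier_mat (n+n) (n+n)"
  unfolding sb_def by auto

lemma scal_mult_left[simp]: fixes A :: "'a::comm_ring_1 mat"
  shows "A \<in> carrier_mat n m \<Longrightarrow> (s \<cdot>\<^sub>m 1\<^sub>m n) * A = s \<cdot>\<^sub>m A"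
  by (subst mult_smult_assoc_mat[of _ n n], auto)
lemma scal_mult_right[simp]: fixes A :: "'a::comm_ring_1 mat"
  shows "A \<in> carrier_mat n m \<Longrightarrow> A * (s \<cdot>\<^sub>m 1\<^sub>m m) = s \<cdot>\<^sub>m A"
  by (subst mult_smult_distrib[of _ _ m], auto)

lemma dg_sb_commute: fixes A :: "'a::comm_ring_1 mat"
  assumes A: "A \<in> carrier_mat n n"
  shows "dg A * sb n s t u v = sb n s t u v * dg A"
proof -
  have d: "dim_row A = n" "dim_col A = n" using A by auto
  show ?thesis unfolding dg_def sb_def d
    by (subst (1 2) mult_four_block_mat[of _ n n], insert A, auto simp: mult_smult_distrib)
qed

lemma dg_mult: fixes A :: "'a::comm_ring_1 mat"
  assumes A: "A \<in> carrier_mat n n" and B: "B \<in> carrier_mat n n"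
  shows "dg A * dg B = dg (A * B)"
proof -
  have d: "dim_row A = n" "dim_col A = n" "dim_row B = n" "dim_col B = n" using A B by auto
  show ?thesis unfolding dg_def d
    by (subst mult_four_block_mat[of _ n n], insert A B, auto)
qed

lemma sb_smult: "c \<cdot>\<^sub>m sb n s t u v = sb n (c*s) (c*t) (c*u) (c*v)"
  unfolding sb_def by (rule eq_matI, auto)

lemma sb_minus_dg: fixes M :: "'a::comm_ring_1 mat"
  assumes M: "M \<in> carrier_mat n n"
  shows "sb n s t u v - dg M = four_block_mat (s \<cdot>\<^sub>m 1\<^sub>m n - M) (t \<cdot>\<^sub>m 1\<^sub>m n) (u \<cdot>\<^sub>m 1\<^sub>m n) (v \<cdot>\<^sub>m 1\<^sub>m n - M)"
  unfolding sb_def dg_def using M by (intro eq_matI, auto)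

lemma scal_id_prod: fixes M :: "'a::comm_ring_1 mat"
  assumes M: "M \<in> carrier_mat n n"
  shows "(x \<cdot>\<^sub>m 1\<^sub>m n - M) * (y \<cdot>\<^sub>m 1\<^sub>m n - M) = (x*y) \<cdot>\<^sub>m 1\<^sub>m n - (x+y) \<cdot>\<^sub>m M + M * M"
proof -
  have "(x \<cdot>\<^sub>m 1\<^sub>m n - M) * (y \<cdot>\<^sub>m 1\<^sub>m n - M) = (x \<cdot>\<^sub>m 1\<^sub>m n) * (y \<cdot>\<^sub>m 1\<^sub>m n - M) - M * (y \<cdot>\<^sub>m 1\<^sub>m n - M)"
    using M by (subst minus_mult_distrib_mat[of _ n n], auto)
  also have "(x \<cdot>\<^sub>m 1\<^sub>m n) * (y \<cdot>\<^sub>m 1\<^sub>m n - M) = (x*y) \<cdot>\<^sub>m 1\<^sub>m n - x \<cdot>\<^sub>m M"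
    using M by (subst mult_minus_distrib_mat[of _ n n], auto simp: mult_smult_distrib mult_smult_assoc_mat)
  also have "M * (y \<cdot>\<^sub>m 1\<^sub>m n - M) = y \<cdot>\<^sub>m M - M * M"
    using M by (subst mult_minus_distrib_mat[of _ n n], auto simp: mult_smult_distrib)
  finally show ?thesis using M by (intro eq_matI, auto simp: algebra_simps)
qed

definition Hm :: "complex mat \<Rightarrow> complex \<Rightarrow> complex \<Rightarrow> complex mat" where
  "Hm X a b = four_block_mat (0\<^sub>m (dim_row X + dim_row X) (dim_row X + dim_row X)) (dg X) (dg X)
      (sb (dim_row X) a b (-b) a)"

lemma cpm_Hm: assumes X: "X \<in> carrier_mat n n"
  shows "char_poly_matrix (Hm X a b) = four_block_mat ([:0,1:] \<cdot>\<^sub>m 1\<^sub>m (n+n))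
     (dg (map_mat (\<lambda>x. [:-x:]) X)) (dg (map_mat (\<lambda>x. [:-x:]) X)) (sb n [:-a,1:] [:-b:] [:b:] [:-a,1:])"
  using X unfolding char_poly_matrix_def Hm_def dg_def sb_def
  by (intro eq_matI, auto)

lemma det_scal_minus_map: fixes Y :: "'a::comm_ring_1 mat"
  assumes Y: "Y \<in> carrier_mat n n"
  shows "det (\<mu> \<cdot>\<^sub>m 1\<^sub>m n - map_mat (\<lambda>x. [:x:]) Y) = char_poly Y \<circ>\<^sub>p \<mu>"
proof -
  have "map_mat (\<lambda>q. q \<circ>\<^sub>p \<mu>) (char_poly_matrix Y) = \<mu> \<cdot>\<^sub>m 1\<^sub>m n - map_mat (\<lambda>x. [:x:]) Y"
    using Y unfolding char_poly_matrix_def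
    by (intro eq_matI, auto simp: pcompose_pCons)
  hence "det (\<mu> \<cdot>\<^sub>m 1\<^sub>m n - map_mat (\<lambda>x. [:x:]) Y) = det (map_mat (\<lambda>q. q \<circ>\<^sub>p \<mu>) (char_poly_matrix Y))"
    by simp
  also have "\<dots> = char_poly Y \<circ>\<^sub>p \<mu>" unfolding char_poly_def by (rule comm_ring_hom.hom_det, rule pcompose_hom.comm_ring_hom_axioms)
  finally show ?thesis .
qed

lemma KK: fixes X :: "'a::comm_ring_1 mat"
  assumes X: "X \<in> carrier_mat n n"
  shows "map_mat (\<lambda>x. [:-x:]) X * map_mat (\<lambda>x. [:-x:]) X = map_mat (\<lambda>x. [:x:]) (X * X)"
proof -
  have e: "map_mat (\<lambda>x. [:-x:]) X = [:-1:] \<cdot>\<^sub>m map_mat (\<lambda>x. [:x:]) X"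
    using X by (intro eq_matI, auto)
  show ?thesis unfolding e map_poly_mult[OF X X]
    using X by (subst mult_smult_assoc_mat[of _ n n], force, force,
       subst mult_smult_distrib[of _ _ n], force, force, auto)
qed

lemma sq_minus_scal: fixes M :: "'a::comm_ring_1 mat"
  assumes M: "M \<in> carrier_mat n n" and e1: "x1 * x2 = al * al - be * ga" and e2: "x1 + x2 = al + al"
  shows "(al \<cdot>\<^sub>m 1\<^sub>m n - M) * (al \<cdot>\<^sub>m 1\<^sub>m n - M) - (be \<cdot>\<^sub>m 1\<^sub>m n) * (ga \<cdot>\<^sub>m 1\<^sub>m n)
     = (x1 \<cdot>\<^sub>m 1\<^sub>m n - M) * (x2 \<cdot>\<^sub>m 1\<^sub>m n - M)"
  unfolding scal_id_prod[OF M] using M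
  by (intro eq_matI, auto simp: e1 e2 algebra_simps)

lemma char_poly_Hm: assumes X: "X \<in> carrier_mat n n"
  and s: "s * s = - (b * b)"
  shows "char_poly (Hm X a b) = (char_poly (X * X) \<circ>\<^sub>p [:0, -(a+s), 1:]) * (char_poly (X * X) \<circ>\<^sub>p [:0, -(a-s), 1:])"
proof -
  define K where "K = map_mat (\<lambda>x. [:-x:]) X"
  have K: "K \<in> carrier_mat n n" using X unfolding K_def by auto
  define D where "D = sb n [:-a,1:] [:-b:] [:b:] [:-a,1:]"
  have D: "D \<in> carrier_mat (n+n) (n+n)" unfolding D_def by auto
  define KK where "KK = map_mat (\<lambda>x. [:x:]) (X * X)"
  have KKc: "KK \<in> carrier_mat n n" using X unfolding KK_def by auto
  have KKe: "K * K = KK" unfolding K_def KK_def by (rule KK[OF X])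
  define \<alpha> where "\<alpha> = [:0,1:] * [:-a,1:]"
  define \<beta> where "\<beta> = [:0,1:] * [:-b:]"
  define \<gamma> where "\<gamma> = [:0,1:] * [:b:]"
  have "char_poly (Hm X a b) = det (four_block_mat ([:0,1:] \<cdot>\<^sub>m 1\<^sub>m (n+n)) (dg K) (dg K) D)"
    unfolding char_poly_def cpm_Hm[OF X] K_def D_def ..
  also have "\<dots> = det (([:0,1:] \<cdot>\<^sub>m 1\<^sub>m (n+n)) * D - dg K * dg K)"
    by (rule det_four_block_mat[of _ "n+n"], insert K D, auto simp: D_def dg_sb_commute[OF K])
  also have "([:0,1:] \<cdot>\<^sub>m 1\<^sub>m (n+n)) * D = sb n \<alpha> \<beta> \<gamma> \<alpha>"
    unfolding scal_mult_left[OF D] unfolding D_def sb_smult \<alpha>_def \<beta>_def \<gamma>_def by simp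
  also have "dg K * dg K = dg KK" using dg_mult[OF K K] KKe by simp
  also have "sb n \<alpha> \<beta> \<gamma> \<alpha> - dg KK = four_block_mat (\<alpha> \<cdot>\<^sub>m 1\<^sub>m n - KK) (\<beta> \<cdot>\<^sub>m 1\<^sub>m n) (\<gamma> \<cdot>\<^sub>m 1\<^sub>m n) (\<alpha> \<cdot>\<^sub>m 1\<^sub>m n - KK)"
    by (rule sb_minus_dg[OF KKc])
  also have "det \<dots> = det ((\<alpha> \<cdot>\<^sub>m 1\<^sub>m n - KK) * (\<alpha> \<cdot>\<^sub>m 1\<^sub>m n - KK) - (\<beta> \<cdot>\<^sub>m 1\<^sub>m n) * (\<gamma> \<cdot>\<^sub>m 1\<^sub>m n))"
  proof -
    have c: "\<alpha> \<cdot>\<^sub>m 1\<^sub>m n - KK \<in> carrier_mat n n" using KKc by auto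
    show ?thesis by (rule det_four_block_mat[of _ n], insert KKc c, auto simp: scal_mult_left[OF c] scal_mult_right[OF c])
  qed
  also have "(\<alpha> \<cdot>\<^sub>m 1\<^sub>m n - KK) * (\<alpha> \<cdot>\<^sub>m 1\<^sub>m n - KK) - (\<beta> \<cdot>\<^sub>m 1\<^sub>m n) * (\<gamma> \<cdot>\<^sub>m 1\<^sub>m n)
     = ([:0, -(a+s), 1:] \<cdot>\<^sub>m 1\<^sub>m n - KK) * ([:0, -(a-s), 1:] \<cdot>\<^sub>m 1\<^sub>m n - KK)"
  proof -
    have pe: "\<alpha> * \<alpha> - \<beta> * \<gamma> = [:0, -(a+s), 1:] * [:0, -(a-s), 1:]"
      unfolding \<alpha>_def \<beta>_def \<gamma>_def using s
      by (simp add: algebra_simps)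
    have pe2: "\<alpha> + \<alpha> = [:0, -(a+s), 1:] + [:0, -(a-s), 1:]"
      unfolding \<alpha>_def by simp
    show ?thesis by (rule sq_minus_scal[OF KKc pe[symmetric] pe2[symmetric]])
  qed
  also have "det \<dots> = det ([:0, -(a+s), 1:] \<cdot>\<^sub>m 1\<^sub>m n - KK) * det ([:0, -(a-s), 1:] \<cdot>\<^sub>m 1\<^sub>m n - KK)"
    by (rule det_mult[of _ n], insert KKc, auto)
  also have "\<dots> = (char_poly (X * X) \<circ>\<^sub>p [:0, -(a+s), 1:]) * (char_poly (X * X) \<circ>\<^sub>p [:0, -(a-s), 1:])"
    unfolding KK_def using X by (simp add: det_scal_minus_map[of _ n])
  finally show ?thesis .
qed

lemma ut_sq: fixes B :: "'a::comm_ring_1 mat"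
  assumes B: "B \<in> carrier_mat n n" and ut: "upper_triangular B"
  shows "upper_triangular (B * B)" "diag_mat (B * B) = map (\<lambda>d. d * d) (diag_mat B)"
proof -
  have z: "B $$ (i,j) = 0" if "j < i" "i < n" for i j using ut that B by auto
  have e: "(B * B) $$ (i,j) = (\<Sum>k<n. B $$ (i,k) * B $$ (k,j))" if "i < n" "j < n" for i j
    using B that by (auto simp: scalar_prod_def row_def col_def lessThan_atLeast0)
  show "upper_triangular (B * B)" unfolding upper_triangular_def
  proof (intro allI impI)
    fix i j assume i: "i < dim_row (B * B)" and j: "j < i"
    hence i': "i < n" using B by auto
    have "(\<Sum>k<n. B $$ (i,k) * B $$ (k,j)) = 0"
    proof (rule sum.neutral, intro ballI)
      fix k assume k: "k \<in> {..<n}"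
      show "B $$ (i,k) * B $$ (k,j) = 0"
      proof (cases "k < i")
        case True thus ?thesis using z[of k i] i' by simp
      next
        case False hence "j < k" using j by simp
        thus ?thesis using z[of j k] k by simp
      qed
    qed
    thus "(B * B) $$ (i,j) = 0" using e[OF i'] j i' by auto
  qed
  show "diag_mat (B * B) = map (\<lambda>d. d * d) (diag_mat B)"
  proof (rule nth_equalityI)
    show "length (diag_mat (B * B)) = length (map (\<lambda>d. d * d) (diag_mat B))" using B by (simp add: diag_mat_def)
    fix i assume "i < length (diag_mat (B * B))"
    hence i: "i < n" using B by (simp add: diag_mat_def)
    have "(\<Sum>k<n. B $$ (i,k) * B $$ (k,i)) = B $$ (i,i) * B $$ (i,i) + (\<Sum>k\<in>{..<n} - {i}. B $$ (i,k) * B $$ (k,i))"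
      by (subst sum.remove[of _ i], insert i, auto)
    also have "(\<Sum>k\<in>{..<n} - {i}. B $$ (i,k) * B $$ (k,i)) = 0"
    proof (rule sum.neutral, intro ballI)
      fix k assume k: "k \<in> {..<n} - {i}"
      show "B $$ (i,k) * B $$ (k,i) = 0"
      proof (cases "k < i")
        case True thus ?thesis using z[of k i] i by simp
      next
        case False hence "i < k" using k by auto
        thus ?thesis using z[of i k] k by simp
      qed
    qed
    finally have "(\<Sum>k<n. B $$ (i,k) * B $$ (k,i)) = B $$ (i,i) * B $$ (i,i)" by simp
    thus "diag_mat (B * B) ! i = map (\<lambda>d. d * d) (diag_mat B) ! i"
      using e[OF i i] i B by (simp add: diag_mat_def)
  qed
qed

lemma schur_sq: fixes X :: "complex mat"
  assumes X: "X \<in> carrier_mat n n"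
  shows "\<exists>ds. length ds = n \<and> char_poly X = (\<Prod>d\<leftarrow>ds. [:-d, 1:]) \<and> char_poly (X * X) = (\<Prod>d\<leftarrow>ds. [:-(d*d), 1:])"
proof -
  obtain es where cp: "char_poly X = (\<Prod>a\<leftarrow>es. [:- a, 1:])" and len: "length es = n"
    using char_poly_factorized[OF X] by blast
  obtain B P Q where sd: "schur_decomposition X es = (B,P,Q)" by (cases "schur_decomposition X es", auto)
  from schur_decomposition[OF X cp sd] have sim: "similar_mat_wit X B P Q" and ut: "upper_triangular B"
    and dB: "diag_mat B = es" by auto
  from similar_mat_witD2[OF X sim] have Bc: "B \<in> carrier_mat n n" by auto
  from similar_mat_wit_pow[OF sim, of 2] have sim2: "similar_mat_wit (X ^\<^sub>m 2) (B ^\<^sub>m 2) P Q" .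
  have "X ^\<^sub>m 2 = X * X" using X by (simp add: numeral_2_eq_2)
  moreover have "B ^\<^sub>m 2 = B * B" using Bc by (simp add: numeral_2_eq_2)
  ultimately have "similar_mat (X * X) (B * B)" using sim2 unfolding similar_mat_def by auto
  hence "char_poly (X * X) = char_poly (B * B)" by (rule char_poly_similar)
  also have "\<dots> = (\<Prod>a\<leftarrow>diag_mat (B * B). [:- a, 1:])"
    by (rule char_poly_upper_triangular[of _ n], insert Bc ut_sq[OF Bc ut], auto)
  also have "\<dots> = (\<Prod>d\<leftarrow>es. [:-(d*d), 1:])" unfolding ut_sq(2)[OF Bc ut] dB
    by (simp add: comp_def)
  finally show ?thesis using cp len by blast
qed

lemma hermitian_eigen_real: fixes X :: "complex mat"
  assumes X: "X \<in> carrier_mat n n" and herm: "\<And>i j. i < n \<Longrightarrow> j < n \<Longrightarrow> X $$ (j,i) = cnj (X $$ (i,j))"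
  and root: "poly (char_poly X) d = 0"
  shows "Im d = 0"
proof -
  from root eigenvalue_root_char_poly[OF X] have "eigenvalue X d" by simp
  then obtain v where ev: "eigenvector X v d" unfolding eigenvalue_def by auto
  hence v: "v \<in> carrier_vec n" and v0: "v \<noteq> 0\<^sub>v n" and Xv: "X *\<^sub>v v = d \<cdot>\<^sub>v v"
    unfolding eigenvector_def using X by auto
  define s where "s = (\<Sum>i<n. \<Sum>j<n. cnj (v $ i) * X $$ (i,j) * v $ j)"
  define T where "T = (\<Sum>i<n. cnj (v $ i) * v $ i)"
  have "s = (\<Sum>i<n. cnj (v $ i) * (X *\<^sub>v v) $ i)"
    unfolding s_def using X v
    by (intro sum.cong refl, auto simp: scalar_prod_def row_def sum_distrib_left lessThan_atLeast0 ac_simps)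
  also have "\<dots> = d * T" unfolding Xv T_def using v
    by (auto simp: sum_distrib_left ac_simps intro!: sum.cong)
  finally have sT: "s = d * T" .
  have "cnj s = (\<Sum>i<n. \<Sum>j<n. v $ i * cnj (X $$ (i,j)) * cnj (v $ j))"
    unfolding s_def by simp
  also have "\<dots> = (\<Sum>i<n. \<Sum>j<n. v $ i * X $$ (j,i) * cnj (v $ j))"
    by (intro sum.cong refl, subst herm, auto)
  also have "\<dots> = s" unfolding s_def by (subst sum.swap, simp add: ac_simps)
  finally have cs: "cnj s = s" .
  have Treal: "T = of_real (\<Sum>i<n. (cmod (v $ i))^2)"
    unfolding T_def of_real_sum
    by (intro sum.cong refl, subst complex_norm_square, simp add: mult.commute)
  obtain i where i: "i < n" and vi: "v $ i \<noteq> 0" using v0 v by (metis eq_vecI carrier_vecD index_zero_vec)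
  have R: "(\<Sum>i<n. (cmod (v $ i))^2) > 0"
    by (rule sum_pos2[of _ i], insert i vi, auto)
  have T0: "T \<noteq> 0" using R Treal by (metis less_irrefl of_real_eq_0_iff)
  have T1: "cnj T = T" unfolding Treal by (rule complex_cnj_complex_of_real)
  have "cnj d * T = d * T" using cs sT T1 by (metis complex_cnj_mult)
  hence "cnj d = d" using T0 by simp
  thus ?thesis by (metis Reals_cnj_iff complex_is_Real_iff)
qed

definition rcnt :: "(complex \<Rightarrow> bool) \<Rightarrow> complex poly \<Rightarrow> nat" where
  "rcnt P p = (\<Sum>x\<in>{x. poly p x = 0 \<and> P x}. Polynomial.order x p)"

definition psig :: "complex poly \<Rightarrow> int" where
  "psig p = int (rcnt (\<lambda>x. Im x = 0 \<and> Re x > 0) p) - int (rcnt (\<lambda>x. Im x = 0 \<and> Re x < 0) p)"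

definition sg :: "real \<Rightarrow> int" where "sg x = (if x > 0 then 1 else if x < 0 then -1 else 0)"

lemma herm_sig_psig: "hermitian_signature A = psig (char_poly A)"
  unfolding hermitian_signature_def psig_def rcnt_def by (simp add: conj_assoc)

lemma rcnt_mult: assumes p: "p \<noteq> 0" and q: "q \<noteq> 0"
  shows "rcnt P (p * q) = rcnt P p + rcnt P q"
proof -
  let ?R = "\<lambda>p. {x. poly p x = 0 \<and> P x}"
  have pq: "p * q \<noteq> 0" using p q by simp
  have fin: "finite (?R (p*q))" using poly_roots_finite[OF pq] by (rule finite_subset[rotated], auto)
  have "rcnt P (p * q) = (\<Sum>x\<in>?R (p*q). Polynomial.order x p + Polynomial.order x q)"
    unfolding rcnt_def by (intro sum.cong refl order_mult[OF pq])
  also have "\<dots> = (\<Sum>x\<in>?R (p*q). Polynomial.order x p) + (\<Sum>x\<in>?R (p*q). Polynomial.order x q)" by (rule sum.distrib)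
  also have "(\<Sum>x\<in>?R (p*q). Polynomial.order x p) = (\<Sum>x\<in>?R p. Polynomial.order x p)"
    by (rule sum.mono_neutral_right[OF fin], auto simp: order_root)
  also have "(\<Sum>x\<in>?R (p*q). Polynomial.order x q) = (\<Sum>x\<in>?R q. Polynomial.order x q)"
    by (rule sum.mono_neutral_right[OF fin], auto simp: order_root)
  finally show ?thesis unfolding rcnt_def .
qed

lemma psig_mult: "p \<noteq> 0 \<Longrightarrow> q \<noteq> 0 \<Longrightarrow> psig (p * q) = psig p + psig q"
  unfolding psig_def by (simp add: rcnt_mult)

lemma psig_1: "psig 1 = 0" unfolding psig_def rcnt_def by simp

lemma psig_prod_list: "(\<And>p. p \<in> set ps \<Longrightarrow> p \<noteq> 0) \<Longrightarrow> psig (prod_list ps) = sum_list (map psig ps)"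
proof (induction ps)
  case Nil thus ?case by (simp add: psig_1)
next
  case (Cons p ps)
  have "prod_list ps \<noteq> 0" using Cons.prems by (auto simp: prod_list_zero_iff)
  thus ?case using Cons by (simp add: psig_mult)
qed

lemma rcnt_lin: "rcnt P [:-r, 1:] = (if P r then 1 else 0)"
proof -
  have "{x. poly [:-r,1:] x = 0 \<and> P x} = (if P r then {r} else {})" by auto
  moreover have "Polynomial.order r [:-r,1:] = 1" using order_power_n_n[of r 1] by simp
  ultimately show ?thesis unfolding rcnt_def by auto
qed

lemma psig_lin: "psig [:-complex_of_real r, 1:] = sg r"
  unfolding psig_def rcnt_lin sg_def by auto

lemma lin_prod: fixes a b :: "'a::comm_ring_1"
  shows "[:-a,1:]*[:-b,1:] = [:a*b, -(a+b), 1:]"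
  by (simp add: mult_pCons_left mult_pCons_right algebra_simps)

lemma psig_quad: fixes d l :: real
  shows "psig [:-(complex_of_real d * complex_of_real d), -complex_of_real l, 1:] = (if d = 0 then sg l else 0)"
proof -
  define rt where "rt = sqrt (l^2 + 4 * d^2)"
  have rt2: "rt^2 = l^2 + 4*d^2" unfolding rt_def by simp
  have rt0: "rt \<ge> 0" unfolding rt_def by simp
  define r1 where "r1 = (l + rt) / 2"
  define r2 where "r2 = (l - rt) / 2"
  have s: "r1 + r2 = l" unfolding r1_def r2_def by (simp add: field_simps)
  have p: "r1 * r2 = - (d * d)" unfolding r1_def r2_def using rt2 by (simp add: field_simps power2_eq_square)
  have "[:-(complex_of_real d * complex_of_real d), -complex_of_real l, 1:] =
     [:-complex_of_real r1, 1:] * [:-complex_of_real r2, 1:]"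
  proof -
    have "complex_of_real r1 * complex_of_real r2 = -(complex_of_real d * complex_of_real d)"
      by (simp only: of_real_mult[symmetric] p, simp)
    moreover have "complex_of_real r1 + complex_of_real r2 = complex_of_real l"
      by (simp only: of_real_add[symmetric] s)
    ultimately show ?thesis unfolding lin_prod by simp
  qed
  moreover have "psig ([:-complex_of_real r1, 1:] * [:-complex_of_real r2, 1:]) = sg r1 + sg r2"
    by (subst psig_mult, auto simp: psig_lin)
  ultimately have "psig [:-(complex_of_real d * complex_of_real d), -complex_of_real l, 1:] = sg r1 + sg r2"
    by simp
  also have "\<dots> = (if d = 0 then sg l else 0)"
  proof (cases "d = 0")
    case True
    hence "rt = \<bar>l\<bar>" unfolding rt_def by simp
    thus ?thesis using True unfolding r1_def r2_def sg_def by auto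
  next
    case False
    hence "rt^2 > l^2" using rt2 by simp
    hence "rt > \<bar>l\<bar>" using rt0 by (metis abs_ge_zero abs_of_nonneg power_less_imp_less_base power2_abs)
    thus ?thesis using False unfolding r1_def r2_def sg_def by auto
  qed
  finally show ?thesis .
qed

lemma comp_prod: "(\<Prod>d\<leftarrow>ds. [:-(d*d), 1:]) \<circ>\<^sub>p [:0, -\<mu>, 1:] = (\<Prod>d\<leftarrow>ds. [:-(d*d), -\<mu>, 1:])"
proof (induction ds)
  case Nil show ?case by simp
next
  case (Cons d ds)
  have "[:-(d*d),1:] \<circ>\<^sub>p [:0,-\<mu>,1:] = [:-(d*d), -\<mu>, 1:]" by (simp add: pcompose_pCons)
  thus ?case using Cons by (simp only: list.map prod_list.Cons pcompose_mult)
qed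

lemma psig_prod_quad: assumes "\<And>d. d \<in> set ds \<Longrightarrow> Im d = 0"
  shows "psig (\<Prod>d\<leftarrow>ds. [:-(d*d), -complex_of_real M, 1:]) = int (length (filter (\<lambda>d. d = 0) ds)) * sg M"
  using assms
proof (induction ds)
  case Nil thus ?case by (simp add: psig_1)
next
  case (Cons d ds)
  have nz: "(\<Prod>d\<leftarrow>ds. [:-(d*d), -complex_of_real M, 1:]) \<noteq> 0"
    by (auto simp: prod_list_zero_iff)
  have dr: "d = complex_of_real (Re d)" using Cons.prems by (simp add: complex_eq_iff)
  have "psig [:-(d*d), -complex_of_real M, 1:] = (if d = 0 then sg M else 0)"
    using psig_quad[of "Re d" M] dr by (metis of_real_eq_0_iff)
  moreover have "psig (\<Prod>d\<leftarrow>d # ds. [:-(d*d), -complex_of_real M, 1:]) =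
     psig [:-(d*d), -complex_of_real M, 1:] + psig (\<Prod>d\<leftarrow>ds. [:-(d*d), -complex_of_real M, 1:])"
    unfolding list.map prod_list.Cons by (rule psig_mult, simp, rule nz)
  ultimately show ?case using Cons by (auto simp: algebra_simps)
qed

lemma sig_Hm: fixes X :: "complex mat"
  assumes X: "X \<in> carrier_mat n n" and herm: "\<And>i j. i < n \<Longrightarrow> j < n \<Longrightarrow> X $$ (j,i) = cnj (X $$ (i,j))"
  shows "\<exists>N::nat. (det X = 0 \<longrightarrow> N \<ge> 1) \<and> (\<forall>A S b. b * b = - (complex_of_real S * complex_of_real S) \<longrightarrow>
     hermitian_signature (Hm X (complex_of_real A) b) = int N * (sg (A + S) + sg (A - S)))"
proof -
  obtain ds where len: "length ds = n" and cpX: "char_poly X = (\<Prod>d\<leftarrow>ds. [:-d, 1:])"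
    and cpXX: "char_poly (X * X) = (\<Prod>d\<leftarrow>ds. [:-(d*d), 1:])" using schur_sq[OF X] by blast
  have real: "Im d = 0" if d: "d \<in> set ds" for d
  proof (rule hermitian_eigen_real[OF X herm])
    show "poly (char_poly X) d = 0" unfolding cpX using d by (auto simp: poly_prod_list_zero_iff)
  qed
  define N where "N = length (filter (\<lambda>d. d = 0) ds)"
  have "det X = 0 \<longrightarrow> N \<ge> 1"
  proof
    assume "det X = 0"
    moreover have "X + 0 \<cdot>\<^sub>m 1\<^sub>m n = X" using X by (intro eq_matI, auto)
    ultimately have "eigenvalue X 0" unfolding eigenvalue_det[OF X] char_matrix_def using X by simp
    hence "poly (char_poly X) 0 = 0" using eigenvalue_root_char_poly[OF X] by simp
    hence "0 \<in> set ds" unfolding cpX by (auto simp: poly_prod_list_zero_iff)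
    hence "(0::complex) \<in> set (filter (\<lambda>d. d = 0) ds)" by simp
    hence "length (filter (\<lambda>d. d = 0) ds) > 0" by (rule length_pos_if_in_set)
    thus "N \<ge> 1" unfolding N_def by linarith
  qed
  moreover have "hermitian_signature (Hm X (complex_of_real A) b) = int N * (sg (A + S) + sg (A - S))"
    if b: "b * b = - (complex_of_real S * complex_of_real S)" for A S b
  proof -
    have s: "complex_of_real S * complex_of_real S = - (b * b)" using b by simp
    have cp: "char_poly (Hm X (complex_of_real A) b) =
      (\<Prod>d\<leftarrow>ds. [:-(d*d), -complex_of_real (A+S), 1:]) * (\<Prod>d\<leftarrow>ds. [:-(d*d), -complex_of_real (A-S), 1:])"
      unfolding char_poly_Hm[OF X s] cpXX comp_prod by simp
    have q1: "psig (\<Prod>d\<leftarrow>ds. [:-(d*d), -complex_of_real (A+S), 1:]) = int N * sg (A+S)"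
      unfolding N_def by (rule psig_prod_quad, rule real)
    have q2: "psig (\<Prod>d\<leftarrow>ds. [:-(d*d), -complex_of_real (A-S), 1:]) = int N * sg (A-S)"
      unfolding N_def by (rule psig_prod_quad, rule real)
    have nz: "(\<Prod>d\<leftarrow>ds. [:-(d*d), -complex_of_real M, 1:]) \<noteq> 0" for M
      by (auto simp: prod_list_zero_iff)
    have "psig (char_poly (Hm X (complex_of_real A) b)) =
       psig (\<Prod>d\<leftarrow>ds. [:-(d*d), -complex_of_real (A+S), 1:]) + psig (\<Prod>d\<leftarrow>ds. [:-(d*d), -complex_of_real (A-S), 1:])"
      by (simp only: cp, rule psig_mult[OF nz nz])
    also have "\<dots> = int N * (sg (A + S) + sg (A - S))"
      using q1 q2 by (simp add: algebra_simps)
    finally show ?thesis unfolding herm_sig_psig .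
  qed
  ultimately show ?thesis by blast
qed

definition Wm :: "int mat \<Rightarrow> int \<Rightarrow> int \<Rightarrow> int mat" where
  "Wm V p q = four_block_mat (0\<^sub>m (dim_row V + dim_row V) (dim_row V + dim_row V)) (dg V) (dg V)
      (sb (dim_row V) p q (-q) p)"

definition Xm :: "complex \<Rightarrow> int mat \<Rightarrow> complex mat" where
  "Xm \<omega> V = (1 - \<omega>) \<cdot>\<^sub>m map_mat of_int V + (1 - cnj \<omega>) \<cdot>\<^sub>m transpose_mat (map_mat of_int V)"

lemma Wm_carrier: "V \<in> carrier_mat n n \<Longrightarrow> Wm V p q \<in> carrier_mat (n+n+(n+n)) (n+n+(n+n))"
  unfolding Wm_def by auto

lemma TL_Wm: assumes V: "V \<in> carrier_mat n n"
  shows "(1 - \<omega>) \<cdot>\<^sub>m map_mat of_int (Wm V p q) + (1 - cnj \<omega>) \<cdot>\<^sub>m transpose_mat (map_mat of_int (Wm V p q))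
    = Hm (Xm \<omega> V) ((1 - \<omega>) * of_int p + (1 - cnj \<omega>) * of_int p) ((1 - \<omega>) * of_int q - (1 - cnj \<omega>) * of_int q)"
  using V unfolding Wm_def Hm_def Xm_def dg_def sb_def
  by (intro eq_matI, auto simp: algebra_simps)

lemma herm_Xm: "V \<in> carrier_mat n n \<Longrightarrow> i < n \<Longrightarrow> j < n \<Longrightarrow> Xm \<omega> V $$ (j,i) = cnj (Xm \<omega> V $$ (i,j))"
  unfolding Xm_def by simp

lemma Xm_carrier: "V \<in> carrier_mat n n \<Longrightarrow> Xm \<omega> V \<in> carrier_mat n n"
  unfolding Xm_def by auto

lemma det_Xm: assumes V: "V \<in> carrier_mat n n" and w: "cmod \<omega> = 1"
  and root: "poly (map_poly of_int (alexander_poly V)) \<omega> = 0"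
  shows "det (Xm \<omega> V) = 0"
proof -
  define h where "h = (\<lambda>p. poly (map_poly (of_int :: int \<Rightarrow> complex) p) \<omega>)"
  have hom: "comm_ring_hom h" unfolding h_def
    by (unfold_locales, auto simp: of_int_poly_hom.hom_add of_int_poly_hom.hom_mult)
  let ?V = "map_mat (of_int :: int \<Rightarrow> complex) V"
  define M where "M = map_mat (\<lambda>a. [:a:]) V - map_mat (\<lambda>a. [:0, a:]) (transpose_mat V)"
  have "map_mat h M = ?V - \<omega> \<cdot>\<^sub>m transpose_mat ?V"
    unfolding M_def h_def using V by (intro eq_matI, auto simp: of_int_hom.map_poly_pCons_hom)
  hence "det (?V - \<omega> \<cdot>\<^sub>m transpose_mat ?V) = h (det M)"
    using comm_ring_hom.hom_det[OF hom] by metis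
  also have "\<dots> = 0" unfolding h_def M_def using root unfolding alexander_poly_def .
  finally have d0: "det (?V - \<omega> \<cdot>\<^sub>m transpose_mat ?V) = 0" .
  have ww: "cnj \<omega> * \<omega> = 1" using w by (metis complex_norm_square mult.commute of_real_1 power_one)
  have "transpose_mat (Xm \<omega> V) = (1 - cnj \<omega>) \<cdot>\<^sub>m (?V - \<omega> \<cdot>\<^sub>m transpose_mat ?V)"
    unfolding Xm_def using V ww by (intro eq_matI, auto simp: algebra_simps)
  hence "det (transpose_mat (Xm \<omega> V)) = 0" using d0 by simp
  thus ?thesis using det_transpose[OF Xm_carrier[OF V]] by simp
qed
lemma sig_Wm: assumes V: "V \<in> carrier_mat n n"
  shows "\<exists>N::nat. ((cmod \<omega> = 1 \<and> poly (map_poly of_int (alexander_poly V)) \<omega> = 0) \<longrightarrow> N \<ge> 1) \<and>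
    (\<forall>p q. tristram_levine \<omega> (Wm V p q) = int N * (sg ((2 - 2 * Re \<omega>) * of_int p + 2 * Im \<omega> * of_int q)
       + sg ((2 - 2 * Re \<omega>) * of_int p - 2 * Im \<omega> * of_int q)))"
proof -
  from sig_Hm[OF Xm_carrier[OF V] herm_Xm[OF V]] obtain N :: nat where
    N1: "det (Xm \<omega> V) = 0 \<longrightarrow> N \<ge> 1" and
    N2: "\<And>A S b. b * b = - (complex_of_real S * complex_of_real S) \<Longrightarrow>
     hermitian_signature (Hm (Xm \<omega> V) (complex_of_real A) b) = int N * (sg (A + S) + sg (A - S))"
    by blast
  have "(cmod \<omega> = 1 \<and> poly (map_poly of_int (alexander_poly V)) \<omega> = 0) \<longrightarrow> N \<ge> 1"
    using N1 det_Xm[OF V] by blast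
  moreover
  {
    fix p q :: int
    define A where "A = (2 - 2 * Re \<omega>) * of_int p"
    define S where "S = 2 * Im \<omega> * of_int q"
    have a: "(1 - \<omega>) * of_int p + (1 - cnj \<omega>) * of_int p = complex_of_real A"
      unfolding A_def by (simp add: complex_eq_iff algebra_simps)
    have b: "((1 - \<omega>) * of_int q - (1 - cnj \<omega>) * of_int q) * ((1 - \<omega>) * of_int q - (1 - cnj \<omega>) * of_int q)
       = - (complex_of_real S * complex_of_real S)"
      unfolding S_def by (simp add: complex_eq_iff algebra_simps)
    have "tristram_levine \<omega> (Wm V p q) = hermitian_signature (Hm (Xm \<omega> V) (complex_of_real A) ((1 - \<omega>) * of_int q - (1 - cnj \<omega>) * of_int q))"
      unfolding tristram_levine_def Let_def TL_Wm[OF V] a ..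
    also have "\<dots> = int N * (sg (A + S) + sg (A - S))" by (rule N2[OF b])
    finally have "tristram_levine \<omega> (Wm V p q) = int N * (sg ((2 - 2 * Re \<omega>) * of_int p + 2 * Im \<omega> * of_int q)
       + sg ((2 - 2 * Re \<omega>) * of_int p - 2 * Im \<omega> * of_int q))" unfolding A_def S_def .
  }
  ultimately show ?thesis by blast
qed

lemma Wm_minus_T: assumes V: "V \<in> carrier_mat n n"
  shows "Wm V p q - transpose_mat (Wm V p q) = four_block_mat (0\<^sub>m (n+n) (n+n)) (dg (V - transpose_mat V)) (dg (V - transpose_mat V))
     (sb n 0 (2*q) (-2*q) 0)"
  using V unfolding Wm_def dg_def sb_def by (intro eq_matI, auto)

lemma det_dg: fixes M :: "'a::idom mat" assumes M: "M \<in> carrier_mat n n"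
  shows "det (dg M) = det M * det M"
  unfolding dg_def using M by (subst det_four_block_mat_lower_left_zero[where n = n and m = n], auto)

lemma seifert_Wm: assumes S: "seifert_matrix V"
  shows "seifert_matrix (Wm V p q)"
proof -
  define n where "n = dim_row V"
  have V: "V \<in> carrier_mat n n" using S unfolding seifert_matrix_def n_def carrier_mat_def by auto
  define E where "E = V - transpose_mat V"
  have E: "E \<in> carrier_mat n n" using V unfolding E_def by auto
  have dE: "det E \<in> {1, -1}" using S unfolding seifert_matrix_def E_def by auto
  have "det (Wm V p q - transpose_mat (Wm V p q)) = det (0\<^sub>m (n+n) (n+n) * sb n 0 (2*q) (-2*q) 0 - dg E * dg E)"
    unfolding Wm_minus_T[OF V] E_def[symmetric]
    by (rule det_four_block_mat[of _ "n+n"], insert E, auto simp: dg_sb_commute[OF E])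
  also have "0\<^sub>m (n+n) (n+n) * sb n 0 (2*q) (-2*q) 0 - dg E * dg E = (-1) \<cdot>\<^sub>m dg (E * E)"
  proof -
    have "0\<^sub>m (n+n) (n+n) * sb n 0 (2*q) (-2*q) 0 = 0\<^sub>m (n+n) (n+n)"
      by (rule left_mult_zero_mat, simp)
    moreover have "dim_row (dg (E*E)) = n+n" "dim_col (dg (E*E)) = n+n" using E by (auto simp: dg_def)
    ultimately show ?thesis unfolding dg_mult[OF E E] using E by (intro eq_matI, auto)
  qed
  also have "det \<dots> = det E * det E * (det E * det E)"
  proof -
    have EE: "E * E \<in> carrier_mat n n" using E by auto
    have "det ((-1) \<cdot>\<^sub>m dg (E * E)) = (-1)^(n+n) * det (dg (E * E))" using EE by (simp add: dg_def)
    also have "(-1::int)^(n+n) = 1" by (metis mult_2 power_minus1_even even_mult_iff even_two_times_div_two dvd_triv_left)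
    also have "det (dg (E * E)) = det E * det E * (det E * det E)" unfolding det_dg[OF EE] det_mult[OF E E] ..
    finally show ?thesis by simp
  qed
  also have "\<dots> = 1" using dE by auto
  moreover have "dim_row (Wm V p q) = dim_col (Wm V p q)"
    using carrier_matD[OF Wm_carrier[OF V, of p q]] by simp
  ultimately show ?thesis unfolding seifert_matrix_def by simp
qed

lemma int_comb_units: assumes K: "K \<le> N"
  shows "int_comb N (map (unit_vec N) [0..<K]) c = vec N (\<lambda>j. if j < K then c j else 0)"
proof (rule eq_vecI)
  fix j assume "j < dim_vec (vec N (\<lambda>j. if j < K then c j else 0))"
  hence j: "j < N" by simp
  have "(\<Sum>i<length (map (unit_vec N) [0..<K]). c i * (map (unit_vec N) [0..<K] ! i) $ j)
     = (\<Sum>i<K. c i * (if i = j then 1 else 0))"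
    using K j by (intro sum.cong, auto simp: unit_vec_def)
  also have "\<dots> = (\<Sum>i<K. if i = j then c i else 0)" by (rule sum.cong, auto)
  also have "\<dots> = (if j < K then c j else 0)" by (simp add: sum.delta)
  finally show "int_comb N (map (unit_vec N) [0..<K]) c $ j = vec N (\<lambda>j. if j < K then c j else 0) $ j"
    unfolding int_comb_def using j by simp
qed (simp add: int_comb_def)

definition LL :: "nat \<Rightarrow> nat \<Rightarrow> int vec set" where
  "LL N K = {v \<in> carrier_vec N. \<forall>j<N. K \<le> j \<longrightarrow> v $ j = 0}"
definition MM :: "nat \<Rightarrow> nat \<Rightarrow> int vec set" where
  "MM N K = {v \<in> carrier_vec N. \<forall>j<N. j < K \<longrightarrow> v $ j = 0}"

lemma free_LL: assumes K: "K \<le> N" shows "free_of_rank N K (LL N K)"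
  unfolding free_of_rank_def
proof (intro exI[of _ "map (unit_vec N) [0..<K]"] conjI allI impI)
  show "length (map (unit_vec N) [0..<K]) = K" by simp
  show "set (map (unit_vec N) [0..<K]) \<subseteq> carrier_vec N" by auto
  show "LL N K = range (int_comb N (map (unit_vec N) [0..<K]))"
  proof
    show "LL N K \<subseteq> range (int_comb N (map (unit_vec N) [0..<K]))"
    proof
      fix v assume v: "v \<in> LL N K"
      have "v = int_comb N (map (unit_vec N) [0..<K]) (\<lambda>j. v $ j)"
        unfolding int_comb_units[OF K] using v unfolding LL_def by (intro eq_vecI, auto)
      thus "v \<in> range (int_comb N (map (unit_vec N) [0..<K]))" by blast
    qed
    show "range (int_comb N (map (unit_vec N) [0..<K])) \<subseteq> LL N K"
      unfolding int_comb_units[OF K] LL_def by auto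
  qed
  fix c i assume c: "int_comb N (map (unit_vec N) [0..<K]) c = 0\<^sub>v N" and i: "i < K"
  have "int_comb N (map (unit_vec N) [0..<K]) c $ i = c i" unfolding int_comb_units[OF K] using i K by simp
  thus "c i = 0" using c i K by simp
qed

lemma direct_LL: "direct_summand N (LL N K)"
  unfolding direct_summand_def
proof (intro conjI exI[of _ "MM N K"])
  show "int_submodule N (LL N K)" unfolding int_submodule_def LL_def by auto
  show "int_submodule N (MM N K)" unfolding int_submodule_def MM_def by auto
  show "LL N K \<inter> MM N K = {0\<^sub>v N}"
  proof
    show "LL N K \<inter> MM N K \<subseteq> {0\<^sub>v N}"
    proof
      fix v assume v: "v \<in> LL N K \<inter> MM N K"
      have "v = 0\<^sub>v N"
      proof (rule eq_vecI)
        show "dim_vec v = dim_vec (0\<^sub>v N)" using v unfolding LL_def by auto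
        fix j assume "j < dim_vec (0\<^sub>v N)"
        hence j: "j < N" by simp
        show "v $ j = 0\<^sub>v N $ j"
        proof (cases "j < K")
          case True thus ?thesis using v j unfolding MM_def by auto
        next
          case False thus ?thesis using v j unfolding LL_def by auto
        qed
      qed
      thus "v \<in> {0\<^sub>v N}" by simp
    qed
    show "{0\<^sub>v N} \<subseteq> LL N K \<inter> MM N K" unfolding LL_def MM_def by auto
  qed
  show "\<forall>x\<in>carrier_vec N. \<exists>l\<in>LL N K. \<exists>m\<in>MM N K. x = l + m"
  proof
    fix x :: "int vec" assume x: "x \<in> carrier_vec N"
    let ?l = "vec N (\<lambda>j. if j < K then x $ j else 0)"
    let ?m = "vec N (\<lambda>j. if j < K then 0 else x $ j)"
    have "x = ?l + ?m" using x by (intro eq_vecI, auto)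
    moreover have "?l \<in> LL N K" "?m \<in> MM N K" unfolding LL_def MM_def by auto
    ultimately show "\<exists>l\<in>LL N K. \<exists>m\<in>MM N K. x = l + m" by blast
  qed
qed

lemma iso_Wm: assumes V: "V \<in> carrier_mat n n"
  and x: "x \<in> LL (n+n+(n+n)) (n+n)" and y: "y \<in> LL (n+n+(n+n)) (n+n)"
  shows "x \<bullet> (Wm V p q *\<^sub>v y) = 0"
proof -
  let ?N = "n+n+(n+n)"
  have W: "Wm V p q \<in> carrier_mat ?N ?N" by (rule Wm_carrier[OF V])
  have xc: "x \<in> carrier_vec ?N" and yc: "y \<in> carrier_vec ?N" using x y unfolding LL_def by auto
  have Wy: "(Wm V p q *\<^sub>v y) $ i = 0" if i: "i < n+n" for i
  proof -
    have "(Wm V p q *\<^sub>v y) $ i = (\<Sum>j<?N. Wm V p q $$ (i,j) * y $ j)"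
      using W yc i by (auto simp: scalar_prod_def row_def lessThan_atLeast0)
    also have "\<dots> = 0"
    proof (rule sum.neutral, intro ballI)
      fix j assume j: "j \<in> {..<?N}"
      show "Wm V p q $$ (i,j) * y $ j = 0"
      proof (cases "j < n+n")
        case True thus ?thesis using i V unfolding Wm_def by simp
      next
        case False thus ?thesis using y j unfolding LL_def by auto
      qed
    qed
    finally show ?thesis .
  qed
  have "x \<bullet> (Wm V p q *\<^sub>v y) = (\<Sum>i<?N. x $ i * (Wm V p q *\<^sub>v y) $ i)"
    using W by (simp add: scalar_prod_def lessThan_atLeast0)
  also have "\<dots> = 0"
  proof (rule sum.neutral, intro ballI)
    fix i assume i: "i \<in> {..<?N}"
    show "x $ i * (Wm V p q *\<^sub>v y) $ i = 0"
    proof (cases "i < n+n")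
      case True thus ?thesis using Wy by simp
    next
      case False thus ?thesis using x i unfolding LL_def by auto
    qed
  qed
  finally show ?thesis .
qed

lemma metabolic_Wm: assumes V: "V \<in> carrier_mat n n"
  shows "metabolic (Wm V p q)"
  unfolding metabolic_def
proof (intro exI[of _ "n+n"] exI[of _ "LL (n+n+(n+n)) (n+n)"] conjI ballI)
  have W: "Wm V p q \<in> carrier_mat (n+n+(n+n)) (n+n+(n+n))" by (rule Wm_carrier[OF V])
  have e: "2 * (n+n) = n+n+(n+n)" by simp
  show "dim_row (Wm V p q) = 2 * (n + n)" "dim_col (Wm V p q) = 2 * (n + n)" using W by auto
  show "direct_summand (2 * (n + n)) (LL (n + n + (n + n)) (n + n))" unfolding e by (rule direct_LL)
  show "free_of_rank (2 * (n + n)) (n + n) (LL (n + n + (n + n)) (n + n))" unfolding e by (rule free_LL, simp)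
  fix x y assume "x \<in> LL (n + n + (n + n)) (n + n)" "y \<in> LL (n + n + (n + n)) (n + n)"
  thus "x \<bullet> (Wm V p q *\<^sub>v y) = 0" by (rule iso_Wm[OF V])
qed

definition kap :: "complex \<Rightarrow> real" where "kap w = Im w / (1 - Re w)"

lemma unit_facts: assumes "cmod w = 1" "Im w > 0"
  shows "Re w < 1" "(Re w)^2 + (Im w)^2 = 1"
proof -
  show e: "(Re w)^2 + (Im w)^2 = 1" using cmod_power2[of w] assms(1) by simp
  have "(Im w)^2 > 0" using assms(2) by simp
  hence "(Re w)^2 < 1" using e by linarith
  thus "Re w < 1" by (metis abs_less_iff abs_square_less_1)
qed

lemma kap_pos: assumes "cmod w = 1" "Im w > 0" shows "kap w > 0"
  using unit_facts[OF assms] assms(2) unfolding kap_def by simp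

lemma kap_inj: assumes u1: "cmod w1 = 1" "Im w1 > 0" and u2: "cmod w2 = 1" "Im w2 > 0"
  and k: "kap w1 = kap w2" shows "w1 = w2"
proof -
  note f1 = unit_facts[OF u1] and f2 = unit_facts[OF u2]
  have sq: "(kap w)^2 = (1 + Re w) / (1 - Re w)" if "cmod w = 1" "Im w > 0" for w
  proof -
    note f = unit_facts[OF that]
    have "(kap w)^2 = (Im w)^2 / (1 - Re w)^2" unfolding kap_def by (simp add: power_divide)
    also have "(Im w)^2 = (1 - Re w) * (1 + Re w)" using f(2) by (simp add: algebra_simps power2_eq_square)
    finally show ?thesis using f(1) by (simp add: power2_eq_square)
  qed
  have "(1 + Re w1) / (1 - Re w1) = (1 + Re w2) / (1 - Re w2)" using sq[OF u1] sq[OF u2] k by simp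
  hence "(1 + Re w1) * (1 - Re w2) = (1 + Re w2) * (1 - Re w1)" using f1(1) f2(1)
    by (simp add: field_simps)
  hence re: "Re w1 = Re w2" by (simp add: algebra_simps)
  hence "(Im w1)^2 = (Im w2)^2" using f1(2) f2(2) by simp
  hence "Im w1 = Im w2" using u1(2) u2(2) by (metis abs_of_pos real_sqrt_abs)
  thus ?thesis using re by (simp add: complex_eq_iff)
qed

lemma sign_crit: fixes p q :: int
  assumes u: "cmod w = 1" "Im w > 0" and q: "q > 0"
  shows "(2 - 2 * Re w) * of_int p - 2 * Im w * of_int q > 0 \<longleftrightarrow> kap w < of_int p / of_int q"
proof -
  have a: "1 - Re w > 0" using unit_facts[OF u] by simp
  have "kap w < of_int p / of_int q \<longleftrightarrow> Im w * of_int q < of_int p * (1 - Re w)"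
    unfolding kap_def using a q by (simp add: divide_less_eq less_divide_eq field_simps)
  thus ?thesis by (simp add: algebra_simps, linarith)
qed


lemma sign_crit2: fixes p q :: int
  assumes u: "cmod w = 1" "Im w > 0" and q: "q > 0"
  shows "(2 - 2 * Re w) * of_int p - 2 * Im w * of_int q < 0 \<longleftrightarrow> kap w > of_int p / of_int q"
proof -
  have a: "1 - Re w > 0" using unit_facts[OF u] by simp
  have "kap w > of_int p / of_int q \<longleftrightarrow> Im w * of_int q > of_int p * (1 - Re w)"
    unfolding kap_def using a q by (simp add: divide_less_eq less_divide_eq field_simps)
  thus ?thesis by (simp add: algebra_simps, linarith)
qed

lemma sg_pos: "x > 0 \<Longrightarrow> sg x = 1" and sg_neg: "x < 0 \<Longrightarrow> sg x = -1"
  unfolding sg_def by auto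

theorem theorem2:
  fixes ws :: "complex list" and c :: "nat \<Rightarrow> real"
  assumes "distinct ws"
    and "set ws \<subseteq> D_set"
    and "\<forall>V. seifert_matrix V \<and> metabolic V \<longrightarrow>
           (\<Sum>i<length ws. c i * real_of_int (tristram_levine (ws ! i) V)) = 0"
  shows "\<forall>i<length ws. c i = 0"
proof (rule ccontr)
  assume "\<not> (\<forall>i<length ws. c i = 0)"
  define J where "J = {i. i < length ws \<and> c i \<noteq> 0}"
  have Jne: "J \<noteq> {}" using \<open>\<not> (\<forall>i<length ws. c i = 0)\<close> unfolding J_def by auto
  have Jfin: "finite J" unfolding J_def by auto
  define k where "k = (\<lambda>i. kap (ws ! i))"
  have "Max (k ` J) \<in> k ` J" using Jne Jfin by (intro Max_in, auto)
  then obtain j where jJ: "j \<in> J" and jM: "k j = Max (k ` J)" by auto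
  have jmax: "k i \<le> k j" if "i \<in> J" for i unfolding jM using Jfin that by (intro Max_ge, auto)
  have jl: "j < length ws" and cj: "c j \<noteq> 0" using jJ unfolding J_def by auto
  have wsD: "ws ! i \<in> D_set" if "i < length ws" for i using assms(2) that by auto
  have unit: "cmod (ws ! i) = 1" "Im (ws ! i) > 0" if "i < length ws" for i
    using wsD[OF that] unfolding D_set_def by auto
  obtain V0 where S0: "seifert_matrix V0" and root: "poly (map_poly of_int (alexander_poly V0)) (ws ! j) = 0"
    using wsD[OF jl] unfolding D_set_def by auto
  define n where "n = dim_row V0"
  have V0: "V0 \<in> carrier_mat n n" using S0 unfolding seifert_matrix_def n_def carrier_mat_def by auto
  have "\<forall>i. \<exists>N::nat. ((cmod (ws ! i) = 1 \<and> poly (map_poly of_int (alexander_poly V0)) (ws ! i) = 0) \<longrightarrow> N \<ge> 1) \<and>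
    (\<forall>p q. tristram_levine (ws ! i) (Wm V0 p q) = int N * (sg ((2 - 2 * Re (ws ! i)) * of_int p + 2 * Im (ws ! i) * of_int q)
       + sg ((2 - 2 * Re (ws ! i)) * of_int p - 2 * Im (ws ! i) * of_int q)))"
    using sig_Wm[OF V0] by blast
  then obtain Nf :: "nat \<Rightarrow> nat" where Nf: "\<And>i. ((cmod (ws ! i) = 1 \<and> poly (map_poly of_int (alexander_poly V0)) (ws ! i) = 0) \<longrightarrow> Nf i \<ge> 1)"
    "\<And>i p q. tristram_levine (ws ! i) (Wm V0 p q) = int (Nf i) * (sg ((2 - 2 * Re (ws ! i)) * of_int p + 2 * Im (ws ! i) * of_int q)
       + sg ((2 - 2 * Re (ws ! i)) * of_int p - 2 * Im (ws ! i) * of_int q))"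
    by metis
  have Nj: "Nf j \<ge> 1" using Nf(1)[of j] unit[OF jl] root by auto
  define LO where "LO = insert 0 {k i | i. i < length ws \<and> k i < k j}"
  have LOfin: "finite LO" unfolding LO_def by auto
  define lo where "lo = Max LO"
  have kj0: "k j > 0" unfolding k_def using kap_pos[OF unit[OF jl]] .
  have lo_lt: "lo < k j" unfolding lo_def
    using LOfin kj0 by (subst Max_less_iff, auto simp: LO_def)
  have lo0: "lo \<ge> 0" unfolding lo_def using LOfin by (intro Max_ge, auto simp: LO_def)
  have lo_ge: "k i \<le> lo" if "i < length ws" "k i < k j" for i
    unfolding lo_def using LOfin that by (intro Max_ge, auto simp: LO_def)
  obtain r where r: "r \<in> \<rat>" "lo < r" "r < k j" using Rats_dense_in_real[OF lo_lt] by auto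
  obtain p q :: int where q: "q > 0" and rpq: "r = of_int p / of_int q" using r(1) by (metis Rats_cases')
  have "seifert_matrix (Wm V0 1 0) \<and> metabolic (Wm V0 1 0)"
    using seifert_Wm[OF S0] metabolic_Wm[OF V0] by blast
  hence s1: "(\<Sum>i<length ws. c i * real_of_int (tristram_levine (ws ! i) (Wm V0 1 0))) = 0" using assms(3) by blast
  have "seifert_matrix (Wm V0 p q) \<and> metabolic (Wm V0 p q)"
    using seifert_Wm[OF S0] metabolic_Wm[OF V0] by blast
  hence s2: "(\<Sum>i<length ws. c i * real_of_int (tristram_levine (ws ! i) (Wm V0 p q))) = 0" using assms(3) by blast
  define d where "d = (\<lambda>i. real_of_int (tristram_levine (ws ! i) (Wm V0 1 0)) - real_of_int (tristram_levine (ws ! i) (Wm V0 p q)))"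
  have d_eq: "d i = real (Nf i) * (1 - real_of_int (sg ((2 - 2 * Re (ws ! i)) * of_int p - 2 * Im (ws ! i) * of_int q)))"
    if i: "i < length ws" for i
  proof -
    note f = unit_facts[OF unit[OF i]]
    have A: "(2 - 2 * Re (ws ! i)) * of_int 1 + 2 * Im (ws ! i) * of_int 0 > 0"
         "(2 - 2 * Re (ws ! i)) * of_int 1 - 2 * Im (ws ! i) * of_int 0 > 0" using f by auto
    have "r > 0" using lo0 r by simp
    hence "p > 0" using q rpq by (simp add: zero_less_divide_iff)
    hence B: "(2 - 2 * Re (ws ! i)) * of_int p + 2 * Im (ws ! i) * of_int q > 0"
      using f unit[OF i] q by (intro add_pos_pos mult_pos_pos, auto)
    show ?thesis unfolding d_def Nf(2)[of i] sg_pos[OF A(1)] sg_pos[OF A(2)] sg_pos[OF B]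
      by (simp add: algebra_simps)
  qed
  have "(\<Sum>i<length ws. c i * d i) = 0"
    using s1 s2 unfolding d_def by (simp add: algebra_simps sum_subtractf)
  moreover have "(\<Sum>i<length ws. c i * d i) = c j * d j"
  proof -
    have "(\<Sum>i<length ws. c i * d i) = c j * d j + (\<Sum>i\<in>{..<length ws} - {j}. c i * d i)"
      using jl by (subst sum.remove[of _ j], auto)
    also have "(\<Sum>i\<in>{..<length ws} - {j}. c i * d i) = 0"
    proof (rule sum.neutral, intro ballI)
      fix i assume i: "i \<in> {..<length ws} - {j}"
      hence il: "i < length ws" and ij: "i \<noteq> j" by auto
      show "c i * d i = 0"
      proof (cases "c i = 0")
        case False
        hence "i \<in> J" using il unfolding J_def by auto
        hence le: "k i \<le> k j" by (rule jmax)
        have "ws ! i \<noteq> ws ! j" using assms(1) il jl ij by (simp add: nth_eq_iff_index_eq)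
        hence "k i \<noteq> k j" unfolding k_def using kap_inj[OF unit[OF il] unit[OF jl]] by auto
        hence "k i < k j" using le by simp
        hence "k i < r" using lo_ge[OF il] r by simp
        hence "kap (ws ! i) < of_int p / of_int q" using rpq unfolding k_def by simp
        hence pos: "(2 - 2 * Re (ws ! i)) * of_int p - 2 * Im (ws ! i) * of_int q > 0"
          using sign_crit[OF unit[OF il] q] by simp
        have "d i = 0" unfolding d_eq[OF il] sg_pos[OF pos] by simp
        thus ?thesis by simp
      qed simp
    qed
    finally show ?thesis by simp
  qed
  moreover have "d j = 2 * real (Nf j)"
  proof -
    have "kap (ws ! j) > of_int p / of_int q" using rpq r unfolding k_def by simp
    hence neg: "(2 - 2 * Re (ws ! j)) * of_int p - 2 * Im (ws ! j) * of_int q < 0"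
      using sign_crit2[OF unit[OF jl] q] by simp
    show ?thesis unfolding d_eq[OF jl] sg_neg[OF neg] by simp
  qed
  ultimately have "c j * (2 * real (Nf j)) = 0" by simp
  thus False using cj Nj by simp
qed

end
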